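(* Let $F^\pm\in\mathcal E(\lambda,\Lambda)$, $f^\pm\in C(B_1^\pm\cup T)$, $g\in C(T)$. A function $u\in\operatorname{USC}(B_1)$ is a viscosity subsolution of the flat problem (FP) if and only if condition (i) of the definition holds and, in place of (ii), the following holds: whenever $x_0\in T$ and $\varphi\in C(B_\delta(x_0))$ with $\varphi^\pm:=\varphi|_{\overline{B^\pm_\delta(x_0)}}\in C^2(\overline{B^\pm_\delta(x_0)})$ touches $u$ from above at $x_0$, then $$F^+(D^2\varphi^+(x_0))\ge f^+(x_0)\quad\text{or}\quad F^-(D^2\varphi^-(x_0))\ge f^-(x_0)\quad\text{or}\quad\varphi^+_{x_n}(x_0)-\varphi^-_{x_n}(x_0)\ge g(x_0).$$ The analogous statement holds for supersolutions (with touching from below and reversed inequalities).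
   Context: $\mathcal E(\lambda,\Lambda)$: the class of $F:\mathcal S^n\to\mathbb R$ with $F(0)=0$ and $\lambda\|N\|\le F(M+N)-F(M)\le\Lambda\|N\|$ for all symmetric $M$ and $N\ge0$. Flat setting: $B_r^\pm=B_r\cap\{\pm x_n>0\}$, $B_\delta^\pm(x_0)=B_\delta(x_0)\cap\{\pm x_n>0\}$, $T=B_1\cap\{x_n=0\}$. The flat problem (FP) is $F^\pm(D^2u)=f^\pm$ in $B_1^\pm$, $u^+_{x_n}-u^-_{x_n}=g$ on $T$. Definition: $u\in\operatorname{USC}(B_1)$ is a viscosity subsolution of (FP) if for any $\varphi$ touching $u$ from above at $x_0\in B_1$: (i) if $x_0\in B_1^\pm$ and $\varphi\in C^2(B_\delta(x_0))$, then $F^\pm(D^2\varphi(x_0))\ge f^\pm(x_0)$; (ii) if $x_0\in T$ and $\varphi$ is continuous with $\varphi^\pm=\varphi|_{\overline{B^\pm_\delta(x_0)}}\in C^2(\overline{B^\pm_\delta(x_0)})$, then $\varphi^+_{x_n}(x_0)-\varphi^-_{x_n}(x_0)\ge g(x_0)$. Supersolutions: lower semicontinuous, touching from below, reversed inequalities; solutions are both. *)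

theory Defs
  imports "HOL-Analysis.Analysis"
begin

text \<open>Points of R^n are vectors real^'n; the distinguished normal coordinate x_n is
  the coordinate with index k :: 'n.  Matrices are real^'n^'n.\<close>

definition usc_on :: "('a::metric_space \<Rightarrow> real) \<Rightarrow> 'a set \<Rightarrow> bool" where
  "usc_on u S \<longleftrightarrow> (\<forall>x\<in>S. \<forall>e>0. \<exists>d>0. \<forall>y\<in>S. dist y x < d \<longrightarrow> u y < u x + e)"

definition lsc_on :: "('a::metric_space \<Rightarrow> real) \<Rightarrow> 'a set \<Rightarrow> bool" where
  "lsc_on u S \<longleftrightarrow> (\<forall>x\<in>S. \<forall>e>0. \<exists>d>0. \<forall>y\<in>S. dist y x < d \<longrightarrow> u x - e < u y)"

definition sym_mat :: "real^'n^'n \<Rightarrow> bool" where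
  "sym_mat M \<longleftrightarrow> transpose M = M"

text \<open>N \<ge> 0 in S^n: symmetric positive semidefinite.\<close>
definition psd_mat :: "real^'n^'n \<Rightarrow> bool" where
  "psd_mat N \<longleftrightarrow> sym_mat N \<and> (\<forall>x. 0 \<le> x \<bullet> (N *v x))"

text \<open>The class E(lambda, Lambda); \<open>\<parallel>N\<parallel>\<close> is the operator norm.\<close>
definition ellipticE :: "real \<Rightarrow> real \<Rightarrow> (real^'n^'n \<Rightarrow> real) \<Rightarrow> bool" where
  "ellipticE l L F \<longleftrightarrow> F 0 = 0 \<and>
     (\<forall>M N. sym_mat M \<and> psd_mat N \<longrightarrow>
        l * onorm (\<lambda>x. N *v x) \<le> F (M + N) - F M \<and>
        F (M + N) - F M \<le> L * onorm (\<lambda>x. N *v x))"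

text \<open>C^2 on a set S (possibly closed, e.g. a closed half ball): D is the gradient
  and H the Hessian, both continuous on S, derivatives taken within S
  (one-sided at boundary points).\<close>
definition C2_on :: "(real^'n) set \<Rightarrow> (real^'n \<Rightarrow> real) \<Rightarrow> (real^'n \<Rightarrow> real^'n)
    \<Rightarrow> (real^'n \<Rightarrow> real^'n^'n) \<Rightarrow> bool" where
  "C2_on S \<phi> D H \<longleftrightarrow> continuous_on S D \<and> continuous_on S H \<and>
     (\<forall>x\<in>S. (\<phi> has_derivative (\<lambda>h. D x \<bullet> h)) (at x within S) \<and>
            (D has_derivative (\<lambda>h. H x *v h)) (at x within S))"

definition B1 :: "(real^'n) set" where "B1 = ball 0 1"
definition B1p :: "'n \<Rightarrow> (real^'n) set" where "B1p k = ball 0 1 \<inter> {x. x $ k > 0}"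
definition B1m :: "'n \<Rightarrow> (real^'n) set" where "B1m k = ball 0 1 \<inter> {x. x $ k < 0}"
definition Tflat :: "'n \<Rightarrow> (real^'n) set" where "Tflat k = ball 0 1 \<inter> {x. x $ k = 0}"

text \<open>closures of B_delta^+(x0), B_delta^-(x0)\<close>
definition cBp :: "'n \<Rightarrow> real^'n \<Rightarrow> real \<Rightarrow> (real^'n) set" where
  "cBp k x0 d = cball x0 d \<inter> {x. x $ k \<ge> 0}"
definition cBm :: "'n \<Rightarrow> real^'n \<Rightarrow> real \<Rightarrow> (real^'n) set" where
  "cBm k x0 d = cball x0 d \<inter> {x. x $ k \<le> 0}"

text \<open>phi touches u from above (below) at x0 within B_delta(x0) (intersected with B_1).\<close>
definition touch_above :: "(real^'n \<Rightarrow> real) \<Rightarrow> (real^'n \<Rightarrow> real) \<Rightarrow> real^'n \<Rightarrow> real \<Rightarrow> bool" where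
  "touch_above u \<phi> x0 d \<longleftrightarrow> \<phi> x0 = u x0 \<and> (\<forall>x\<in>ball x0 d \<inter> B1. u x \<le> \<phi> x)"
definition touch_below :: "(real^'n \<Rightarrow> real) \<Rightarrow> (real^'n \<Rightarrow> real) \<Rightarrow> real^'n \<Rightarrow> real \<Rightarrow> bool" where
  "touch_below u \<phi> x0 d \<longleftrightarrow> \<phi> x0 = u x0 \<and> (\<forall>x\<in>ball x0 d \<inter> B1. \<phi> x \<le> u x)"

text \<open>Condition (i) for sub/supersolutions.\<close>
definition cond_i_sub where
  "cond_i_sub k Fp Fm fp fm u \<longleftrightarrow>
    (\<forall>x0 d \<phi> D H. x0 \<in> B1 \<and> 0 < d \<and> C2_on (ball x0 d) \<phi> D H \<and> touch_above u \<phi> x0 d \<longrightarrow>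
       (x0 \<in> B1p k \<longrightarrow> Fp (H x0) \<ge> fp x0) \<and> (x0 \<in> B1m k \<longrightarrow> Fm (H x0) \<ge> fm x0))"
definition cond_i_super where
  "cond_i_super k Fp Fm fp fm u \<longleftrightarrow>
    (\<forall>x0 d \<phi> D H. x0 \<in> B1 \<and> 0 < d \<and> C2_on (ball x0 d) \<phi> D H \<and> touch_below u \<phi> x0 d \<longrightarrow>
       (x0 \<in> B1p k \<longrightarrow> Fp (H x0) \<le> fp x0) \<and> (x0 \<in> B1m k \<longrightarrow> Fm (H x0) \<le> fm x0))"

text \<open>Condition (ii) (transmission condition on T).\<close>
definition cond_ii_sub where
  "cond_ii_sub k g u \<longleftrightarrow>
    (\<forall>x0 d \<phi> Dp Hp Dm Hm. x0 \<in> Tflat k \<and> 0 < d \<and> continuous_on (ball x0 d) \<phi> \<and>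
       C2_on (cBp k x0 d) \<phi> Dp Hp \<and> C2_on (cBm k x0 d) \<phi> Dm Hm \<and> touch_above u \<phi> x0 d \<longrightarrow>
       Dp x0 $ k - Dm x0 $ k \<ge> g x0)"
definition cond_ii_super where
  "cond_ii_super k g u \<longleftrightarrow>
    (\<forall>x0 d \<phi> Dp Hp Dm Hm. x0 \<in> Tflat k \<and> 0 < d \<and> continuous_on (ball x0 d) \<phi> \<and>
       C2_on (cBp k x0 d) \<phi> Dp Hp \<and> C2_on (cBm k x0 d) \<phi> Dm Hm \<and> touch_below u \<phi> x0 d \<longrightarrow>
       Dp x0 $ k - Dm x0 $ k \<le> g x0)"

text \<open>The alternative (relaxed) condition on T.\<close>
definition cond_ii'_sub where
  "cond_ii'_sub k Fp Fm fp fm g u \<longleftrightarrow>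
    (\<forall>x0 d \<phi> Dp Hp Dm Hm. x0 \<in> Tflat k \<and> 0 < d \<and> continuous_on (ball x0 d) \<phi> \<and>
       C2_on (cBp k x0 d) \<phi> Dp Hp \<and> C2_on (cBm k x0 d) \<phi> Dm Hm \<and> touch_above u \<phi> x0 d \<longrightarrow>
       Fp (Hp x0) \<ge> fp x0 \<or> Fm (Hm x0) \<ge> fm x0 \<or> Dp x0 $ k - Dm x0 $ k \<ge> g x0)"
definition cond_ii'_super where
  "cond_ii'_super k Fp Fm fp fm g u \<longleftrightarrow>
    (\<forall>x0 d \<phi> Dp Hp Dm Hm. x0 \<in> Tflat k \<and> 0 < d \<and> continuous_on (ball x0 d) \<phi> \<and>
       C2_on (cBp k x0 d) \<phi> Dp Hp \<and> C2_on (cBm k x0 d) \<phi> Dm Hm \<and> touch_below u \<phi> x0 d \<longrightarrow>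
       Fp (Hp x0) \<le> fp x0 \<or> Fm (Hm x0) \<le> fm x0 \<or> Dp x0 $ k - Dm x0 $ k \<le> g x0)"

definition visc_sub_FP where
  "visc_sub_FP k Fp Fm fp fm g u \<longleftrightarrow>
     usc_on u B1 \<and> cond_i_sub k Fp Fm fp fm u \<and> cond_ii_sub k g u"
definition visc_super_FP where
  "visc_super_FP k Fp Fm fp fm g u \<longleftrightarrow>
     lsc_on u B1 \<and> cond_i_super k Fp Fm fp fm u \<and> cond_ii_super k g u"

end

theory Submission
  imports Defs
begin


lemma quad_est:
  fixes \<phi> :: "real^'n \<Rightarrow> real"
  assumes C2: "C2_on S \<phi> D H" and cvx: "convex S" and x0: "x0 \<in> S"
  shows "\<exists>C r. 0 < r \<and> 0 \<le> C \<and> (\<forall>x\<in>S. norm (x - x0) < r \<longrightarrow>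
            \<bar>\<phi> x - \<phi> x0 - D x0 \<bullet> (x - x0)\<bar> \<le> C * (norm (x - x0))^2)"
proof -
  have dphi: "\<And>x. x \<in> S \<Longrightarrow> (\<phi> has_derivative (\<lambda>h. D x \<bullet> h)) (at x within S)"
    and dD: "(D has_derivative (\<lambda>h. H x0 *v h)) (at x0 within S)"
    using C2 x0 unfolding C2_on_def by auto
  obtain r where r: "r > 0" "\<forall>y\<in>S. norm (y - x0) < r \<longrightarrow>
      norm (D y - D x0 - H x0 *v (y - x0)) \<le> 1 * norm (y - x0)"
    using dD unfolding has_derivative_within_alt by (meson zero_less_one)
  define B where "B = onorm (\<lambda>h. H x0 *v h)"
  have B0: "0 \<le> B" unfolding B_def by (simp add: onorm_pos_le)
  have Dest: "norm (D y - D x0) \<le> (B + 1) * norm (y - x0)" if "y \<in> S" "norm (y - x0) < r" for y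
  proof -
    have "norm (D y - D x0) \<le> norm (D y - D x0 - H x0 *v (y - x0)) + norm (H x0 *v (y - x0))"
      by (metis diff_add_cancel norm_triangle_ineq)
    also have "\<dots> \<le> norm (y - x0) + B * norm (y - x0)"
      using r that onorm[OF matrix_vector_mul_bounded_linear, of "H x0" "y - x0"] unfolding B_def
      by (intro add_mono) auto
    finally show ?thesis by (simp add: algebra_simps)
  qed
  have main: "\<bar>\<phi> x - \<phi> x0 - D x0 \<bullet> (x - x0)\<bar> \<le> (B + 1) * (norm (x - x0))^2"
    if x: "x \<in> S" "norm (x - x0) < r" for x
  proof -
    define \<rho> where "\<rho> = norm (x - x0)"
    define S' where "S' = S \<inter> cball x0 \<rho>"
    have cS': "convex S'" unfolding S'_def using cvx by (simp add: convex_Int)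
    have x0S': "x0 \<in> S'" and xS': "x \<in> S'" using x0 x unfolding S'_def \<rho>_def
      by (auto simp: dist_norm norm_minus_commute)
    have seg: "x0 + t *\<^sub>R (x - x0) \<in> S'" if "t \<in> {0..1}" for t
    proof -
      have "x0 + t *\<^sub>R (x - x0) = (1 - t) *\<^sub>R x0 + t *\<^sub>R x" by (simp add: algebra_simps)
      then show ?thesis using cS' x0S' xS' that convexD_alt by fastforce
    qed
    have der: "(\<phi> has_derivative (\<lambda>h. D y \<bullet> h)) (at y within S')" if "y \<in> S'" for y
      using dphi[of y] that unfolding S'_def
      by (auto intro: has_derivative_subset)
    have bnd: "onorm ((\<lambda>h. D y \<bullet> h) - (\<lambda>h. D x0 \<bullet> h)) \<le> (B + 1) * \<rho>" if "y \<in> S'" for y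
    proof -
      have eq: "((\<lambda>h. D y \<bullet> h) - (\<lambda>h. D x0 \<bullet> h)) = (\<lambda>h. (D y - D x0) \<bullet> h)"
        by (auto simp: fun_eq_iff inner_diff_left)
      have "onorm (\<lambda>h. (D y - D x0) \<bullet> h) \<le> norm (D y - D x0)"
        by (rule onorm_bound) (auto simp: Cauchy_Schwarz_ineq2)
      also have "\<dots> \<le> (B + 1) * norm (y - x0)"
        using that x unfolding S'_def \<rho>_def
        by (intro Dest) (auto simp: dist_norm norm_minus_commute)
      also have "\<dots> \<le> (B + 1) * \<rho>"
        using that B0 unfolding S'_def by (intro mult_left_mono) (auto simp: dist_norm norm_minus_commute)
      finally show ?thesis unfolding eq .
    qed
    have "norm (\<phi> x - \<phi> x0 - D x0 \<bullet> (x - x0)) \<le> norm (x - x0) * ((B + 1) * \<rho>)"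
      using differentiable_bound_linearization[where S=S' and f'="\<lambda>y h. D y \<bullet> h" and f=\<phi> and a=x0 and b=x and B="(B+1)*\<rho>", OF seg der bnd x0S']
      by -
    then show ?thesis
      unfolding \<rho>_def by (simp add: power2_eq_square algebra_simps)
  qed
  show ?thesis using B0 r(1) main by (intro exI[of _ "B+1"] exI[of _ r]) auto
qed

lemma convex_cBp: fixes k :: "'n::finite" shows "convex (cBp k x0 d)"
proof -
  have "{x::real^'n. x $ k \<ge> 0} = {x. axis k 1 \<bullet> x \<ge> 0}" by (simp add: inner_axis')
  then show ?thesis unfolding cBp_def using convex_halfspace_ge[of 0 "axis k (1::real)"]
    by (metis convex_Int convex_cball)
qed

lemma convex_cBm: fixes k :: "'n::finite" shows "convex (cBm k x0 d)"
proof -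
  have "{x::real^'n. x $ k \<le> 0} = {x. axis k 1 \<bullet> x \<le> 0}" by (simp add: inner_axis')
  then show ?thesis unfolding cBm_def using convex_halfspace_le[of "axis k (1::real)" 0]
    by (metis convex_Int convex_cball)
qed

lemma tang:
  fixes \<phi> :: "real^'n \<Rightarrow> real"
  assumes Cp: "C2_on (cBp k x0 d) \<phi> Dp Hp" and Cm: "C2_on (cBm k x0 d) \<phi> Dm Hm"
    and x0k: "x0 $ k = 0" and d: "0 < d" and vk: "v $ k = 0"
  shows "Dp x0 \<bullet> v = Dm x0 \<bullet> v"
proof (rule ccontr)
  assume ne: "Dp x0 \<bullet> v \<noteq> Dm x0 \<bullet> v"
  define c where "c = \<bar>Dp x0 \<bullet> v - Dm x0 \<bullet> v\<bar>"
  have c0: "c > 0" using ne unfolding c_def by auto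
  have v0: "v \<noteq> 0" using ne by auto
  have nv: "norm v > 0" using v0 by simp
  have x0p: "x0 \<in> cBp k x0 d" and x0m: "x0 \<in> cBm k x0 d"
    using x0k d unfolding cBp_def cBm_def by auto
  obtain Cp' rp where p: "0 < rp" "0 \<le> Cp'" "\<forall>x\<in>cBp k x0 d. norm (x - x0) < rp \<longrightarrow>
      \<bar>\<phi> x - \<phi> x0 - Dp x0 \<bullet> (x - x0)\<bar> \<le> Cp' * (norm (x - x0))^2"
    using quad_est[OF Cp convex_cBp x0p] by blast
  obtain Cm' rm where m: "0 < rm" "0 \<le> Cm'" "\<forall>x\<in>cBm k x0 d. norm (x - x0) < rm \<longrightarrow>
      \<bar>\<phi> x - \<phi> x0 - Dm x0 \<bullet> (x - x0)\<bar> \<le> Cm' * (norm (x - x0))^2"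
    using quad_est[OF Cm convex_cBm x0m] by blast
  define m0 where "m0 = min rp (min rm d)"
  have m0: "m0 > 0" using p m d unfolding m0_def by auto
  define C where "C = Cp' + Cm' + 1"
  have C: "C > 0" using p m unfolding C_def by auto
  define t where "t = min (m0 / (2 * norm v)) (c / (2 * C * (norm v)^2))"
  have t0: "t > 0" using m0 nv c0 C unfolding t_def by auto
  have tv: "t * norm v < m0"
  proof -
    have "t * norm v \<le> m0 / (2 * norm v) * norm v" unfolding t_def using nv
      by (intro mult_right_mono) auto
    also have "\<dots> = m0 / 2" using nv by (simp add: field_simps)
    finally show ?thesis using m0 by simp
  qed
  have tc: "C * t * (norm v)^2 \<le> c / 2"
  proof -
    have "C * t * (norm v)^2 \<le> C * (c / (2 * C * (norm v)^2)) * (norm v)^2"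
      unfolding t_def using C nv by (intro mult_right_mono mult_left_mono) auto
    also have "\<dots> = c / 2" using C nv by (simp add: field_simps)
    finally show ?thesis .
  qed
  define x where "x = x0 + t *\<^sub>R v"
  have xx: "x - x0 = t *\<^sub>R v" unfolding x_def by simp
  have nx: "norm (x - x0) = t * norm v" using t0 unfolding xx by simp
  have xk: "x $ k = 0" using x0k vk unfolding x_def by simp
  have xin: "x \<in> cBp k x0 d" "x \<in> cBm k x0 d"
    using xk tv nx unfolding cBp_def cBm_def m0_def by (auto simp: dist_norm norm_minus_commute)
  have ep: "\<bar>\<phi> x - \<phi> x0 - t * (Dp x0 \<bullet> v)\<bar> \<le> Cp' * (t * norm v)^2"
  proof -
    have "norm (x - x0) < rp" using tv nx unfolding m0_def by auto
    then have "\<bar>\<phi> x - \<phi> x0 - Dp x0 \<bullet> (x - x0)\<bar> \<le> Cp' * (norm (x - x0))^2"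
      using p(3) xin(1) by blast
    then show ?thesis unfolding nx unfolding xx by (simp add: inner_scaleR_right)
  qed
  have em: "\<bar>\<phi> x - \<phi> x0 - t * (Dm x0 \<bullet> v)\<bar> \<le> Cm' * (t * norm v)^2"
  proof -
    have "norm (x - x0) < rm" using tv nx unfolding m0_def by auto
    then have "\<bar>\<phi> x - \<phi> x0 - Dm x0 \<bullet> (x - x0)\<bar> \<le> Cm' * (norm (x - x0))^2"
      using m(3) xin(2) by blast
    then show ?thesis unfolding nx unfolding xx by (simp add: inner_scaleR_right)
  qed
  have "t * c = \<bar>(\<phi> x - \<phi> x0 - t * (Dm x0 \<bullet> v)) - (\<phi> x - \<phi> x0 - t * (Dp x0 \<bullet> v))\<bar>"
    unfolding c_def using t0 by (simp add: abs_mult right_diff_distrib[symmetric])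
  also have "\<dots> \<le> Cp' * (t * norm v)^2 + Cm' * (t * norm v)^2" using ep em by linarith
  also have "\<dots> \<le> C * (t * norm v)^2" unfolding C_def by (simp add: algebra_simps)
  also have "\<dots> = t * (C * t * (norm v)^2)" by (simp add: power2_eq_square)
  also have "\<dots> \<le> t * (c / 2)" using tc t0 by (intro mult_left_mono) auto
  finally have "c \<le> c / 2" using t0 by simp
  then show False using c0 by simp
qed

definition Ek :: "'n::finite \<Rightarrow> real^'n^'n" where
  "Ek k = (\<chi> i j. if i = k \<and> j = k then 1 else 0)"
definition Hmat :: "real \<Rightarrow> real \<Rightarrow> 'n::finite \<Rightarrow> real^'n^'n" where
  "Hmat K M k = (2*K) *\<^sub>R mat 1 - (2*M) *\<^sub>R Ek k"

lemma Ek_mult: "Ek k *v h = (h $ k) *\<^sub>R axis k 1"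
  by (simp add: vec_eq_iff matrix_vector_mult_def Ek_def axis_def if_distrib[of "\<lambda>x. x * _"] cong: if_cong)

lemma Hmat_mult: "Hmat K M k *v h = (2*K) *\<^sub>R h - (2*M*h$k) *\<^sub>R axis k 1"
  by (simp add: Hmat_def matrix_vector_mult_diff_rdistrib Ek_mult scaleR_matrix_vector_assoc[symmetric])

lemma dk: "((\<lambda>x::real^'n::finite. x $ k) has_derivative (\<lambda>h. h $ k)) F"
  by (rule bounded_linear_imp_has_derivative[OF bounded_linear_vec_nth])

lemma dP: fixes a e x0 :: "real^'n::finite"
  shows "((\<lambda>x. c + a \<bullet> (x - x0) + K * ((x - x0) \<bullet> (x - x0)) - M * (x$k)^2 + s * x$k) has_derivative
    (\<lambda>h. (a + (2*K) *\<^sub>R (x - x0) - (2*M*x$k) *\<^sub>R axis k 1 + s *\<^sub>R axis k 1) \<bullet> h)) (at x within S)"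
  apply (rule has_derivative_eq_rhs)
   apply (auto intro!: derivative_eq_intros dk)
  apply (simp add: fun_eq_iff inner_add_left inner_diff_left inner_axis' inner_axis algebra_simps power2_eq_square inner_commute)
  done

lemma dG: fixes a x0 :: "real^'n::finite"
  shows "((\<lambda>x. a + (2*K) *\<^sub>R (x - x0) - (2*M*x$k) *\<^sub>R axis k 1 + s *\<^sub>R axis k 1) has_derivative
    (\<lambda>h. Hmat K M k *v h)) (at x within S)"
  apply (rule has_derivative_eq_rhs)
   apply (auto intro!: derivative_eq_intros dk)
  apply (simp add: fun_eq_iff Hmat_mult algebra_simps)
  done




lemma core:
  fixes k :: "'n::finite" and \<phi> :: "real^'n \<Rightarrow> real"
  assumes Cp: "C2_on (cBp k x0 d) \<phi> Dp Hp" and Cm: "C2_on (cBm k x0 d) \<phi> Dm Hm"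
    and x0k: "x0 $ k = 0" and d: "0 < d"
  shows "\<exists>K. \<forall>\<delta> M. 0 < \<delta> \<longrightarrow> 0 < M \<longrightarrow> (\<exists>d' \<psi> Gp Gm. 0 < d' \<and> d' \<le> d \<and>
     continuous_on UNIV \<psi> \<and> \<psi> x0 = \<phi> x0 \<and> (\<forall>x\<in>ball x0 d'. \<phi> x \<le> \<psi> x) \<and>
     C2_on (cBp k x0 d') \<psi> Gp (\<lambda>_. Hmat K M k) \<and> C2_on (cBm k x0 d') \<psi> Gm (\<lambda>_. Hmat K M k) \<and>
     Gp x0 $ k - Gm x0 $ k = Dp x0 $ k - Dm x0 $ k + 2 * \<delta>)"
proof -
  have x0p: "x0 \<in> cBp k x0 d" and x0m: "x0 \<in> cBm k x0 d"
    using x0k d unfolding cBp_def cBm_def by auto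
  obtain Cp' rp where p: "0 < rp" "0 \<le> Cp'" "\<forall>x\<in>cBp k x0 d. norm (x - x0) < rp \<longrightarrow>
      \<bar>\<phi> x - \<phi> x0 - Dp x0 \<bullet> (x - x0)\<bar> \<le> Cp' * (norm (x - x0))^2"
    using quad_est[OF Cp convex_cBp x0p] by blast
  obtain Cm' rm where m: "0 < rm" "0 \<le> Cm'" "\<forall>x\<in>cBm k x0 d. norm (x - x0) < rm \<longrightarrow>
      \<bar>\<phi> x - \<phi> x0 - Dm x0 \<bullet> (x - x0)\<bar> \<le> Cm' * (norm (x - x0))^2"
    using quad_est[OF Cm convex_cBm x0m] by blast
  define K where "K = Cp' + Cm'"
  define r0 where "r0 = min rp (min rm d)"
  have r0: "0 < r0" "r0 \<le> d" "r0 \<le> rp" "r0 \<le> rm" using p m d unfolding r0_def by auto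
  define a where "a = Dp x0"
  define b where "b = Dm x0"
  define e where "e = (axis k 1 :: real^'n)"
  have tg: "b \<bullet> h = a \<bullet> h + (b$k - a$k) * h$k" for h
  proof -
    define v where "v = h - (h$k) *\<^sub>R e"
    have vk: "v $ k = 0" unfolding v_def e_def by simp
    have "Dp x0 \<bullet> v = Dm x0 \<bullet> v" by (rule tang[OF Cp Cm x0k d vk])
    then have "a \<bullet> v = b \<bullet> v" unfolding a_def b_def .
    have ex: "y \<bullet> h = y \<bullet> v + h$k * y$k" for y
      unfolding v_def e_def by (simp add: inner_diff_right inner_axis)
    then show ?thesis using \<open>a \<bullet> v = b \<bullet> v\<close> ex[of a] ex[of b] by (simp add: algebra_simps)
  qed
  show ?thesis
  proof (rule exI[of _ K], intro allI impI)
    fix \<delta> M :: real assume \<delta>: "0 < \<delta>" and M: "0 < M"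
    define \<beta> where "\<beta> = b$k - a$k - \<delta>"
    define d' where "d' = min r0 (\<delta> / M)"
    have d': "0 < d'" "d' \<le> r0" "d' \<le> \<delta> / M" using r0 \<delta> M unfolding d'_def by auto
    define \<psi> where "\<psi> x = \<phi> x0 + a \<bullet> (x - x0) + K * ((x - x0) \<bullet> (x - x0)) - M * (x$k)^2
        + \<delta> * max (x$k) 0 + \<beta> * min (x$k) 0" for x
    define Pp where "Pp x = \<phi> x0 + a \<bullet> (x - x0) + K * ((x - x0) \<bullet> (x - x0)) - M * (x$k)^2 + \<delta> * x$k" for x
    define Pm where "Pm x = \<phi> x0 + a \<bullet> (x - x0) + K * ((x - x0) \<bullet> (x - x0)) - M * (x$k)^2 + \<beta> * x$k" for x
    define Gp where "Gp x = a + (2*K) *\<^sub>R (x - x0) - (2*M*x$k) *\<^sub>R e + \<delta> *\<^sub>R e" for x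
    define Gm where "Gm x = a + (2*K) *\<^sub>R (x - x0) - (2*M*x$k) *\<^sub>R e + \<beta> *\<^sub>R e" for x
    have psip: "\<psi> x = Pp x" if "x $ k \<ge> 0" for x
      using that unfolding \<psi>_def Pp_def by simp
    have psim: "\<psi> x = Pm x" if "x $ k \<le> 0" for x
      using that unfolding \<psi>_def Pm_def by simp
    have cont: "continuous_on UNIV \<psi>" unfolding \<psi>_def by (intro continuous_intros)
    have val: "\<psi> x0 = \<phi> x0" unfolding \<psi>_def using x0k by simp
    have ineq: "\<phi> x \<le> \<psi> x" if x: "x \<in> ball x0 d'" for x
    proof -
      have nx: "norm (x - x0) < d'" using x by (simp add: dist_norm norm_minus_commute)
      have xk: "\<bar>x $ k\<bar> \<le> norm (x - x0)"
        using component_le_norm_cart[of "x - x0" k] x0k by simp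
      have Mx: "M * \<bar>x $ k\<bar> \<le> \<delta>"
      proof -
        have "\<bar>x $ k\<bar> \<le> \<delta> / M" using xk nx d' by linarith
        then show ?thesis using M by (simp add: field_simps)
      qed
      have sq: "(x - x0) \<bullet> (x - x0) = (norm (x - x0))^2" by (simp add: power2_norm_eq_inner)
      show ?thesis
      proof (cases "x $ k \<ge> 0")
        case True
        have "x \<in> cBp k x0 d" using True nx d' r0 unfolding cBp_def by (auto simp: dist_norm norm_minus_commute)
        then have "\<phi> x \<le> \<phi> x0 + a \<bullet> (x - x0) + Cp' * (norm (x - x0))^2"
          using p(3) nx d' r0 unfolding a_def by fastforce
        moreover have "M * (x$k)^2 \<le> \<delta> * x$k"
          using Mx True by (simp add: power2_eq_square mult_right_mono mult.assoc[symmetric])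
        moreover have "Cp' * (norm (x - x0))^2 \<le> K * (norm (x - x0))^2"
          unfolding K_def using m(2) by (simp add: algebra_simps)
        ultimately show ?thesis using psip[OF True] unfolding Pp_def sq by linarith
      next
        case False
        have "x \<in> cBm k x0 d" using False nx d' r0 unfolding cBm_def by (auto simp: dist_norm norm_minus_commute)
        then have "\<phi> x \<le> \<phi> x0 + b \<bullet> (x - x0) + Cm' * (norm (x - x0))^2"
          using m(3) nx d' r0 unfolding b_def by fastforce
        moreover have "b \<bullet> (x - x0) = a \<bullet> (x - x0) + (b$k - a$k) * x$k" using tg[of "x - x0"] x0k by simp
        moreover have "M * (x$k)^2 \<le> - \<delta> * x$k"
          using Mx False mult_right_mono[of "M * \<bar>x $ k\<bar>" \<delta> "- x$k"]
          by (simp add: power2_eq_square)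
        moreover have "Cm' * (norm (x - x0))^2 \<le> K * (norm (x - x0))^2"
          unfolding K_def using p(2) by (simp add: algebra_simps)
        ultimately show ?thesis using psim[of x] False unfolding Pm_def sq \<beta>_def
          by (simp add: algebra_simps)
      qed
    qed
    have C2p: "C2_on (cBp k x0 d') \<psi> Gp (\<lambda>_. Hmat K M k)"
      unfolding C2_on_def
    proof (intro conjI ballI)
      show "continuous_on (cBp k x0 d') Gp" unfolding Gp_def by (intro continuous_intros)
      show "continuous_on (cBp k x0 d') (\<lambda>_. Hmat K M k)" by (intro continuous_intros)
      fix x assume x: "x \<in> cBp k x0 d'"
      have "(Pp has_derivative (\<lambda>h. Gp x \<bullet> h)) (at x within cBp k x0 d')"
        unfolding Pp_def Gp_def e_def by (rule dP)
      then show "(\<psi> has_derivative (\<lambda>h. Gp x \<bullet> h)) (at x within cBp k x0 d')"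
        by (rule has_derivative_transform_within[where d=1]) (use x psip in \<open>auto simp: cBp_def\<close>)
      show "(Gp has_derivative (*v) (Hmat K M k)) (at x within cBp k x0 d')"
        unfolding Gp_def e_def by (rule dG)
    qed
    have C2m: "C2_on (cBm k x0 d') \<psi> Gm (\<lambda>_. Hmat K M k)"
      unfolding C2_on_def
    proof (intro conjI ballI)
      show "continuous_on (cBm k x0 d') Gm" unfolding Gm_def by (intro continuous_intros)
      show "continuous_on (cBm k x0 d') (\<lambda>_. Hmat K M k)" by (intro continuous_intros)
      fix x assume x: "x \<in> cBm k x0 d'"
      have "(Pm has_derivative (\<lambda>h. Gm x \<bullet> h)) (at x within cBm k x0 d')"
        unfolding Pm_def Gm_def e_def by (rule dP)
      then show "(\<psi> has_derivative (\<lambda>h. Gm x \<bullet> h)) (at x within cBm k x0 d')"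
        by (rule has_derivative_transform_within[where d=1]) (use x psim in \<open>auto simp: cBm_def\<close>)
      show "(Gm has_derivative (*v) (Hmat K M k)) (at x within cBm k x0 d')"
        unfolding Gm_def e_def by (rule dG)
    qed
    have jump: "Gp x0 $ k - Gm x0 $ k = Dp x0 $ k - Dm x0 $ k + 2 * \<delta>"
      unfolding Gp_def Gm_def \<beta>_def e_def a_def b_def using x0k by simp
    show "\<exists>d' \<psi> Gp Gm. 0 < d' \<and> d' \<le> d \<and>
     continuous_on UNIV \<psi> \<and> \<psi> x0 = \<phi> x0 \<and> (\<forall>x\<in>ball x0 d'. \<phi> x \<le> \<psi> x) \<and>
     C2_on (cBp k x0 d') \<psi> Gp (\<lambda>_. Hmat K M k) \<and> C2_on (cBm k x0 d') \<psi> Gm (\<lambda>_. Hmat K M k) \<and>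
     Gp x0 $ k - Gm x0 $ k = Dp x0 $ k - Dm x0 $ k + 2 * \<delta>"
      using d' r0 cont val ineq C2p C2m jump by (intro exI[of _ d'] exI[of _ \<psi>] exI[of _ Gp] exI[of _ Gm]) auto
  qed
qed



lemma C2_neg:
  assumes "C2_on S \<phi> D H"
  shows "C2_on S (\<lambda>x. - \<phi> x) (\<lambda>x. - D x) (\<lambda>x. - H x)"
proof -
  have mv: "(- A) *v h = - (A *v h)" for A :: "real^'n^'n" and h
    by (simp add: vec_eq_iff matrix_vector_mult_def sum_negf)
  show ?thesis using assms unfolding C2_on_def
  proof (intro conjI ballI)
    assume a: "continuous_on S D \<and> continuous_on S H \<and>
      (\<forall>x\<in>S. (\<phi> has_derivative (\<bullet>) (D x)) (at x within S) \<and> (D has_derivative (*v) (H x)) (at x within S))"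
    show "continuous_on S (\<lambda>x. - D x)" "continuous_on S (\<lambda>x. - H x)"
      using a by (auto intro: continuous_on_minus)
    fix x assume x: "x \<in> S"
    show "((\<lambda>x. - \<phi> x) has_derivative (\<bullet>) (- D x)) (at x within S)"
      using a x by (intro has_derivative_eq_rhs[OF has_derivative_minus]) (auto simp: fun_eq_iff)
    show "((\<lambda>x. - D x) has_derivative (*v) (- H x)) (at x within S)"
      using a x by (intro has_derivative_eq_rhs[OF has_derivative_minus]) (auto simp: fun_eq_iff mv)
  qed
qed

lemma sym_Hmat: "sym_mat (Hmat K M k)" "sym_mat (- Hmat K M k)"
  by (auto simp: sym_mat_def vec_eq_iff transpose_def Hmat_def Ek_def mat_def)

lemma psd_N: "psd_mat ((2*M) *\<^sub>R Ek k)" if "0 \<le> M"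
proof -
  have "x \<bullet> (((2*M) *\<^sub>R Ek k) *v x) = 2*M*(x$k)^2" for x
    by (simp add: scaleR_matrix_vector_assoc[symmetric] Ek_mult inner_axis power2_eq_square)
  moreover have "transpose ((2*M) *\<^sub>R Ek k) = (2*M) *\<^sub>R Ek k"
    by (auto simp: vec_eq_iff transpose_def Ek_def)
  ultimately show ?thesis unfolding psd_mat_def sym_mat_def using that by simp
qed

lemma onorm_N: "2 * M \<le> onorm (\<lambda>x. ((2*M) *\<^sub>R Ek k) *v x)" if "0 \<le> M"
proof -
  have "norm (((2*M) *\<^sub>R Ek k) *v axis k 1) \<le> onorm (\<lambda>x. ((2*M) *\<^sub>R Ek k) *v x) * norm (axis k (1::real))"
    by (rule onorm[OF matrix_vector_mul_bounded_linear])
  moreover have "((2*M) *\<^sub>R Ek k) *v axis k 1 = (2*M) *\<^sub>R axis k 1"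
    by (simp add: scaleR_matrix_vector_assoc[symmetric] Ek_mult)
  ultimately show ?thesis using that by simp
qed

lemma Hmat_add: "Hmat K M k + (2*M) *\<^sub>R Ek k = Hmat K 0 k" "- Hmat K 0 k + (2*M) *\<^sub>R Ek k = - Hmat K M k"
  by (auto simp: Hmat_def algebra_simps)

lemma ell_sub:
  assumes "ellipticE l L F" "0 \<le> M" "0 \<le> l"
  shows "F (Hmat K M k) \<le> F (Hmat K 0 k) - l * (2 * M)"
proof -
  have "l * onorm (\<lambda>x. ((2*M) *\<^sub>R Ek k) *v x) \<le> F (Hmat K M k + (2*M) *\<^sub>R Ek k) - F (Hmat K M k)"
    using assms(1) sym_Hmat(1) psd_N[OF assms(2)] unfolding ellipticE_def by blast
  moreover have "l * (2 * M) \<le> l * onorm (\<lambda>x. ((2*M) *\<^sub>R Ek k) *v x)"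
    using assms by (intro mult_left_mono onorm_N) auto
  ultimately show ?thesis unfolding Hmat_add by linarith
qed

lemma ell_super:
  assumes "ellipticE l L F" "0 \<le> M" "0 \<le> l"
  shows "F (- Hmat K 0 k) + l * (2 * M) \<le> F (- Hmat K M k)"
proof -
  have "l * onorm (\<lambda>x. ((2*M) *\<^sub>R Ek k) *v x) \<le> F (- Hmat K 0 k + (2*M) *\<^sub>R Ek k) - F (- Hmat K 0 k)"
    using assms(1) sym_Hmat(2) psd_N[OF assms(2)] unfolding ellipticE_def by blast
  moreover have "l * (2 * M) \<le> l * onorm (\<lambda>x. ((2*M) *\<^sub>R Ek k) *v x)"
    using assms by (intro mult_left_mono onorm_N) auto
  ultimately show ?thesis unfolding Hmat_add by linarith
qed


lemma sub_ii:
  fixes k :: "'n::finite"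
  assumes l: "0 < l" and eFp: "ellipticE l L Fp" and eFm: "ellipticE l L Fm"
    and h: "cond_ii'_sub k Fp Fm fp fm g u"
  shows "cond_ii_sub k g u"
  unfolding cond_ii_sub_def
proof (intro allI impI)
  fix x0 d \<phi> Dp Hp Dm Hm
  assume A: "x0 \<in> Tflat k \<and> 0 < d \<and> continuous_on (ball x0 d) \<phi> \<and>
       C2_on (cBp k x0 d) \<phi> Dp Hp \<and> C2_on (cBm k x0 d) \<phi> Dm Hm \<and> touch_above u \<phi> x0 d"
  have x0k: "x0 $ k = 0" using A unfolding Tflat_def by auto
  show "g x0 \<le> Dp x0 $ k - Dm x0 $ k"
  proof (rule ccontr)
    assume "\<not> ?thesis"
    then have lt: "Dp x0 $ k - Dm x0 $ k < g x0" by simp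
    obtain K where K: "\<And>\<delta> M. 0 < \<delta> \<Longrightarrow> 0 < M \<Longrightarrow> (\<exists>d' \<psi> Gp Gm. 0 < d' \<and> d' \<le> d \<and>
     continuous_on UNIV \<psi> \<and> \<psi> x0 = \<phi> x0 \<and> (\<forall>x\<in>ball x0 d'. \<phi> x \<le> \<psi> x) \<and>
     C2_on (cBp k x0 d') \<psi> Gp (\<lambda>_. Hmat K M k) \<and> C2_on (cBm k x0 d') \<psi> Gm (\<lambda>_. Hmat K M k) \<and>
     Gp x0 $ k - Gm x0 $ k = Dp x0 $ k - Dm x0 $ k + 2 * \<delta>)"
      using core[of k x0 d \<phi> Dp Hp Dm Hm] A x0k by blast
    define \<delta> where "\<delta> = (g x0 - (Dp x0 $ k - Dm x0 $ k)) / 4"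
    define M where "M = (\<bar>Fp (Hmat K 0 k) - fp x0\<bar> + \<bar>Fm (Hmat K 0 k) - fm x0\<bar> + 1) / (2 * l)"
    have \<delta>: "0 < \<delta>" using lt unfolding \<delta>_def by simp
    have M: "0 < M" using l unfolding M_def by (simp add: add_nonneg_pos)
    have lM: "l * (2 * M) = \<bar>Fp (Hmat K 0 k) - fp x0\<bar> + \<bar>Fm (Hmat K 0 k) - fm x0\<bar> + 1"
      using l unfolding M_def by (simp add: field_simps)
    obtain d' \<psi> Gp Gm where G: "0 < d'" "d' \<le> d"
     "continuous_on UNIV \<psi>" "\<psi> x0 = \<phi> x0" "\<forall>x\<in>ball x0 d'. \<phi> x \<le> \<psi> x"
     "C2_on (cBp k x0 d') \<psi> Gp (\<lambda>_. Hmat K M k)" "C2_on (cBm k x0 d') \<psi> Gm (\<lambda>_. Hmat K M k)"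
     "Gp x0 $ k - Gm x0 $ k = Dp x0 $ k - Dm x0 $ k + 2 * \<delta>"
      using K[OF \<delta> M] by blast
    have touch: "touch_above u \<psi> x0 d'"
      unfolding touch_above_def
    proof (intro conjI ballI)
      show "\<psi> x0 = u x0" using A G unfolding touch_above_def by simp
      fix x assume x: "x \<in> ball x0 d' \<inter> B1"
      then have "x \<in> ball x0 d \<inter> B1" using G(2) by auto
      then have "u x \<le> \<phi> x" using A unfolding touch_above_def by blast
      also have "\<phi> x \<le> \<psi> x" using G(5) x by blast
      finally show "u x \<le> \<psi> x" .
    qed
    have "Fp (Hmat K M k) \<ge> fp x0 \<or> Fm (Hmat K M k) \<ge> fm x0 \<or> Gp x0 $ k - Gm x0 $ k \<ge> g x0"
      using h unfolding cond_ii'_sub_def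
      using A G touch continuous_on_subset[OF G(3), of "ball x0 d'"] by blast
    moreover have "Fp (Hmat K M k) < fp x0"
      using ell_sub[OF eFp, of M K k] M l lM by linarith
    moreover have "Fm (Hmat K M k) < fm x0"
      using ell_sub[OF eFm, of M K k] M l lM by linarith
    moreover have "Gp x0 $ k - Gm x0 $ k < g x0" using G(8) lt unfolding \<delta>_def by (simp add: field_simps)
    ultimately show False by linarith
  qed
qed

lemma super_ii:
  fixes k :: "'n::finite"
  assumes l: "0 < l" and eFp: "ellipticE l L Fp" and eFm: "ellipticE l L Fm"
    and h: "cond_ii'_super k Fp Fm fp fm g u"
  shows "cond_ii_super k g u"
  unfolding cond_ii_super_def
proof (intro allI impI)
  fix x0 d \<phi> Dp Hp Dm Hm
  assume A: "x0 \<in> Tflat k \<and> 0 < d \<and> continuous_on (ball x0 d) \<phi> \<and>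
       C2_on (cBp k x0 d) \<phi> Dp Hp \<and> C2_on (cBm k x0 d) \<phi> Dm Hm \<and> touch_below u \<phi> x0 d"
  have x0k: "x0 $ k = 0" using A unfolding Tflat_def by auto
  have Cp: "C2_on (cBp k x0 d) (\<lambda>x. - \<phi> x) (\<lambda>x. - Dp x) (\<lambda>x. - Hp x)"
    and Cm: "C2_on (cBm k x0 d) (\<lambda>x. - \<phi> x) (\<lambda>x. - Dm x) (\<lambda>x. - Hm x)"
    using A C2_neg by blast+
  show "Dp x0 $ k - Dm x0 $ k \<le> g x0"
  proof (rule ccontr)
    assume "\<not> ?thesis"
    then have lt: "g x0 < Dp x0 $ k - Dm x0 $ k" by simp
    have dpos: "0 < d" using A by blast
    obtain K where K: "\<forall>\<delta> M. 0 < \<delta> \<longrightarrow> 0 < M \<longrightarrow> (\<exists>d' \<psi> Gp Gm. 0 < d' \<and> d' \<le> d \<and>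
     continuous_on UNIV \<psi> \<and> \<psi> x0 = - \<phi> x0 \<and> (\<forall>x\<in>ball x0 d'. - \<phi> x \<le> \<psi> x) \<and>
     C2_on (cBp k x0 d') \<psi> Gp (\<lambda>_. Hmat K M k) \<and> C2_on (cBm k x0 d') \<psi> Gm (\<lambda>_. Hmat K M k) \<and>
     Gp x0 $ k - Gm x0 $ k = (- Dp x0) $ k - (- Dm x0) $ k + 2 * \<delta>)"
      using core[OF Cp Cm x0k dpos] by blast
    define \<delta> where "\<delta> = ((Dp x0 $ k - Dm x0 $ k) - g x0) / 4"
    define M where "M = (\<bar>Fp (- Hmat K 0 k) - fp x0\<bar> + \<bar>Fm (- Hmat K 0 k) - fm x0\<bar> + 1) / (2 * l)"
    have \<delta>: "0 < \<delta>" using lt unfolding \<delta>_def by simp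
    have M: "0 < M" using l unfolding M_def by (simp add: add_nonneg_pos)
    have lM: "l * (2 * M) = \<bar>Fp (- Hmat K 0 k) - fp x0\<bar> + \<bar>Fm (- Hmat K 0 k) - fm x0\<bar> + 1"
      using l unfolding M_def by (simp add: field_simps)
    obtain d' \<psi> Gp Gm where G: "0 < d'" "d' \<le> d"
     "continuous_on UNIV \<psi>" "\<psi> x0 = - \<phi> x0" "\<forall>x\<in>ball x0 d'. - \<phi> x \<le> \<psi> x"
     "C2_on (cBp k x0 d') \<psi> Gp (\<lambda>_. Hmat K M k)" "C2_on (cBm k x0 d') \<psi> Gm (\<lambda>_. Hmat K M k)"
     "Gp x0 $ k - Gm x0 $ k = (- Dp x0) $ k - (- Dm x0) $ k + 2 * \<delta>"
      using K[rule_format, OF \<delta> M] by blast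
    have C2p': "C2_on (cBp k x0 d') (\<lambda>x. - \<psi> x) (\<lambda>x. - Gp x) (\<lambda>_. - Hmat K M k)"
      using C2_neg[OF G(6)] by simp
    have C2m': "C2_on (cBm k x0 d') (\<lambda>x. - \<psi> x) (\<lambda>x. - Gm x) (\<lambda>_. - Hmat K M k)"
      using C2_neg[OF G(7)] by simp
    have cont': "continuous_on (ball x0 d') (\<lambda>x. - \<psi> x)"
      using continuous_on_subset[OF G(3)] by (intro continuous_on_minus) auto
    have touch: "touch_below u (\<lambda>x. - \<psi> x) x0 d'"
      unfolding touch_below_def
    proof (intro conjI ballI)
      show "- \<psi> x0 = u x0" using A G unfolding touch_below_def by simp
      fix x assume x: "x \<in> ball x0 d' \<inter> B1"
      then have "x \<in> ball x0 d \<inter> B1" using G(2) by auto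
      then have "\<phi> x \<le> u x" using A unfolding touch_below_def by blast
      moreover have "- \<phi> x \<le> \<psi> x" using G(5) x by blast
      ultimately show "- \<psi> x \<le> u x" by linarith
    qed
    have "Fp (- Hmat K M k) \<le> fp x0 \<or> Fm (- Hmat K M k) \<le> fm x0 \<or> (- Gp x0) $ k - (- Gm x0) $ k \<le> g x0"
      using h unfolding cond_ii'_super_def
      using A G(1) touch cont' C2p' C2m' by blast
    moreover have "Fp (- Hmat K M k) > fp x0"
      using ell_super[OF eFp, of M K k] M l lM by linarith
    moreover have "Fm (- Hmat K M k) > fm x0"
      using ell_super[OF eFm, of M K k] M l lM by linarith
    moreover have "(- Gp x0) $ k - (- Gm x0) $ k > g x0" using G(8) lt unfolding \<delta>_def by (simp add: field_simps)
    ultimately show False by linarith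
  qed
qed

theorem mainTheorem10:
  fixes k :: "'n::finite"
    and Fp Fm :: "real^'n^'n \<Rightarrow> real"
    and fp fm g u :: "real^'n \<Rightarrow> real"
    and l L :: real
  assumes "0 < l" and "l \<le> L"
    and "ellipticE l L Fp" and "ellipticE l L Fm"
    and "continuous_on (B1p k \<union> Tflat k) fp"
    and "continuous_on (B1m k \<union> Tflat k) fm"
    and "continuous_on (Tflat k) g"
  shows "(visc_sub_FP k Fp Fm fp fm g u \<longleftrightarrow>
            usc_on u B1 \<and> cond_i_sub k Fp Fm fp fm u \<and> cond_ii'_sub k Fp Fm fp fm g u)
       \<and> (visc_super_FP k Fp Fm fp fm g u \<longleftrightarrow>
            lsc_on u B1 \<and> cond_i_super k Fp Fm fp fm u \<and> cond_ii'_super k Fp Fm fp fm g u)"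
proof -
  have a: "cond_ii_sub k g u \<Longrightarrow> cond_ii'_sub k Fp Fm fp fm g u"
    unfolding cond_ii_sub_def cond_ii'_sub_def by blast
  have b: "cond_ii_super k g u \<Longrightarrow> cond_ii'_super k Fp Fm fp fm g u"
    unfolding cond_ii_super_def cond_ii'_super_def by blast
  show ?thesis unfolding visc_sub_FP_def visc_super_FP_def
    using a b sub_ii[OF assms(1,3,4)] super_ii[OF assms(1,3,4)] by blast
qed

end
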